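(* Fix $p\le 5$ and a relative order $R$ of length $p$. Let $n_1,\dots,n_h$ and $n'_1,\dots,n'_h$ be nonnegative integers with $n'_a\le n_a$ for all $a$, $\sum_a(n_a-n'_a)\le 5$, and $n'=\sum_a n'_a\ge p$ (the $n'_a$ may be $0$); let $n=\sum_a n_a$. Let $P_1$ be the probability that $(\pi(1),\dots,\pi(p))$ has relative order $R$ when $\pi$ is a uniformly distributed permutation of $\{1^{n_1},\dots,h^{n_h}\}$, and $P_2$ the same probability when $\pi$ is a uniformly distributed permutation of $\{1^{n'_1},\dots,h^{n'_h}\}$. Then $|P_1-P_2|\le C/n$ for an absolute constant $C$ (independent of $h$, $n$, the $n_a$, the $n'_a$, and $R$).
   Context: A permutation of the multiset $\{1^{m_1},\dots,h^{m_h}\}$ is a sequence $(\pi(1),\dots,\pi(m))$, $m=\sum m_a$, in which each $a$ occurs exactly $m_a$ times; uniformly distributed means all such sequences are equally likely. The relative order of a sequence $s_1,\dots,s_p$ is the ordered partition of $\{1,\dots,p\}$ obtained by putting $q$ and $r$ in the same block iff $s_q=s_r$, with blocks ordered by increasing common value of $s_q$. *)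

theory Defs
  imports "HOL-Probability.Probability" "HOL-Combinatorics.Multiset_Permutations"
begin

definition mset_of_mults :: "nat \<Rightarrow> (nat \<Rightarrow> nat) \<Rightarrow> nat multiset" where
  "mset_of_mults h m = (\<Sum>a\<in>{1..h}. replicate_mset (m a) a)"

(* Relative order of s_1,...,s_p (list positions 1-indexed): ordered partition of {1..p},
   blocks ordered by increasing common value *)
definition rel_order :: "nat list \<Rightarrow> nat set list" where
  "rel_order s = map (\<lambda>v. {q \<in> {1..length s}. s ! (q - 1) = v}) (sorted_list_of_set (set s))"

definition ordered_partition :: "nat \<Rightarrow> nat set list \<Rightarrow> bool" where
  "ordered_partition p R \<longleftrightarrow> (\<forall>B\<in>set R. B \<noteq> {}) \<and>
     (\<forall>i j. i < j \<and> j < length R \<longrightarrow> R ! i \<inter> R ! j = {}) \<and> \<Union>(set R) = {1..p}"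

definition prob_rel_order :: "nat \<Rightarrow> (nat \<Rightarrow> nat) \<Rightarrow> nat \<Rightarrow> nat set list \<Rightarrow> real" where
  "prob_rel_order h m p R =
     measure_pmf.prob (pmf_of_set (permutations_of_multiset (mset_of_mults h m)))
       {\<pi>. rel_order (take p \<pi>) = R}"

end

theory Submission
  imports Defs
begin

definition Qp :: "nat \<Rightarrow> 'a multiset \<Rightarrow> 'a list set \<Rightarrow> real" where
  "Qp p M E = real (card {\<pi> \<in> permutations_of_multiset M. take p \<pi> \<in> E}) / real (card (permutations_of_multiset M))"

lemma card_perms_pos: "card (permutations_of_multiset M) > 0"
  by (simp add: card_gt_0_iff)

lemma Qp_bounds: "0 \<le> Qp p M E" "Qp p M E \<le> 1"
proof -
  have "card {\<pi> \<in> permutations_of_multiset M. take p \<pi> \<in> E} \<le> card (permutations_of_multiset M)"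
    by (intro card_mono) auto
  then show "0 \<le> Qp p M E" "Qp p M E \<le> 1" using card_perms_pos[of M]
    by (auto simp: Qp_def divide_le_eq)
qed

lemma Qp_0: "Qp 0 M E = (if [] \<in> E then 1 else 0)"
  using card_perms_pos[of M] by (auto simp: Qp_def)

lemma Qp_Suc:
  assumes "M \<noteq> {#}"
  shows "Qp (Suc p) M E = (\<Sum>x\<in>set_mset M. real (count M x) / real (size M) * Qp p (M - {#x#}) {l. x # l \<in> E})"
proof -
  define S where "S x = {\<sigma> \<in> permutations_of_multiset (M - {#x#}). take p \<sigma> \<in> {l. x # l \<in> E}}" for x
  have eq: "{\<pi> \<in> permutations_of_multiset M. take (Suc p) \<pi> \<in> E} = (\<Union>x\<in>set_mset M. (#) x ` S x)"
    unfolding S_def by (subst permutations_of_multiset_nonempty[OF assms]) auto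
  have fin: "finite (S x)" for x unfolding S_def by simp
  have "card {\<pi> \<in> permutations_of_multiset M. take (Suc p) \<pi> \<in> E} = (\<Sum>x\<in>set_mset M. card ((#) x ` S x))"
    unfolding eq by (rule card_UN_disjoint) (auto simp: fin)
  also have "\<dots> = (\<Sum>x\<in>set_mset M. card (S x))"
    by (intro sum.cong refl card_image) auto
  finally have c: "card {\<pi> \<in> permutations_of_multiset M. take (Suc p) \<pi> \<in> E} = (\<Sum>x\<in>set_mset M. card (S x))" .
  have sz: "size M > 0" using assms by (simp add: nonempty_has_size)
  have "real (card (S x)) / real (card (permutations_of_multiset M)) =
        real (count M x) / real (size M) * Qp p (M - {#x#}) {l. x # l \<in> E}" if "x \<in># M" for x
  proof -
    have r: "real (card (permutations_of_multiset (M - {#x#}))) = 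
             real (card (permutations_of_multiset M) * count M x) / real (size M)"
      by (rule real_card_permutations_of_multiset_remove[OF that])
    have "count M x > 0" using that by simp
    then show ?thesis using sz card_perms_pos[of M]
      unfolding Qp_def S_def[symmetric] r by (simp add: field_simps)
  qed
  note h = this
  have "Qp (Suc p) M E = (\<Sum>x\<in>set_mset M. real (card (S x)) / real (card (permutations_of_multiset M)))"
    unfolding Qp_def[of "Suc p"] c by (simp add: sum_divide_distrib)
  also have "\<dots> = (\<Sum>x\<in>set_mset M. real (count M x) / real (size M) * Qp p (M - {#x#}) {l. x # l \<in> E})"
    by (intro sum.cong refl h) simp
  finally show ?thesis .
qed

lemma aux: "(n::real) \<ge> 0 \<Longrightarrow> n/(n+1)*b' + a/(n+1) - b = (a-b)/(n+1) + n/(n+1)*(b'-b)"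
proof -
  assume "n \<ge> 0"
  then have d: "n + 1 \<noteq> 0" by simp
  have "b = (n+1)/(n+1) * b" using d by simp
  also have "\<dots> = n/(n+1)*b + 1/(n+1)*b" by (metis add_divide_distrib distrib_right)
  finally have "b = n/(n+1)*b + 1/(n+1)*b" .
  then show ?thesis by (simp add: diff_divide_distrib right_diff_distrib)
qed

lemma Qp_add1: "\<bar>Qp p (M + {#c#}) E - Qp p M E\<bar> \<le> real p / (real (size M) + 1)"
proof (induction p arbitrary: M E)
  case 0
  then show ?case by (simp add: Qp_0)
next
  case (Suc p)
  show ?case
  proof (cases "M = {#}")
    case True
    then show ?thesis using Qp_bounds[of "Suc p" "M + {#c#}" E] Qp_bounds[of "Suc p" M E] by simp
  next
    case False
    define N where "N = size M"
    have N: "N \<ge> 1" using False by (simp add: N_def Suc_le_eq nonempty_has_size)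
    define F where "F x = {l. x # l \<in> E}" for x
    define A where "A = Qp p M (F c)"
    define B where "B = (\<Sum>x\<in>set_mset M. real (count M x) / real N * Qp p (M - {#x#}) (F x))"
    define B' where "B' = (\<Sum>x\<in>set_mset M. real (count M x) / real N * Qp p (M - {#x#} + {#c#}) (F x))"
    have Q: "Qp (Suc p) M E = B" unfolding B_def N_def F_def by (rule Qp_Suc[OF False])
    have "Qp (Suc p) (M + {#c#}) E = (\<Sum>x\<in>set_mset (M + {#c#}). real (count (M + {#c#}) x) / real (N + 1) * Qp p (M + {#c#} - {#x#}) (F x))"
      unfolding N_def F_def by (subst Qp_Suc) auto
    also have "\<dots> = (\<Sum>x\<in>set_mset (M + {#c#}). real (count M x) / real (N + 1) * Qp p (M + {#c#} - {#x#}) (F x))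
                 + (\<Sum>x\<in>set_mset (M + {#c#}). (if x = c then 1 else 0) / real (N + 1) * Qp p (M + {#c#} - {#x#}) (F x))"
      by (subst sum.distrib[symmetric]) (intro sum.cong refl, auto simp: add_divide_distrib distrib_right)
    also have "(\<Sum>x\<in>set_mset (M + {#c#}). (if x = c then 1 else 0) / real (N + 1) * Qp p (M + {#c#} - {#x#}) (F x)) = A / real (N + 1)"
    proof -
      have "(\<Sum>x\<in>set_mset (M + {#c#}). (if x = c then 1 else 0) / real (N + 1) * Qp p (M + {#c#} - {#x#}) (F x))
         = (\<Sum>x\<in>set_mset (M + {#c#}). if x = c then Qp p (M + {#c#} - {#x#}) (F x) / real (N + 1) else 0)"
        by (intro sum.cong) auto
      also have "\<dots> = A / real (N + 1)" unfolding A_def by (subst sum.delta) auto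
      finally show ?thesis .
    qed
    also have "(\<Sum>x\<in>set_mset (M + {#c#}). real (count M x) / real (N + 1) * Qp p (M + {#c#} - {#x#}) (F x))
             = (\<Sum>x\<in>set_mset M. real (count M x) / real (N + 1) * Qp p (M + {#c#} - {#x#}) (F x))"
      by (rule sum.mono_neutral_right) (auto simp: not_in_iff)
    also have "\<dots> = (\<Sum>x\<in>set_mset M. real N / real (N + 1) * (real (count M x) / real N * Qp p (M - {#x#} + {#c#}) (F x)))"
    proof (intro sum.cong refl)
      fix x
      have "real N \<noteq> 0" using N by simp
      then show "real (count M x) / real (N + 1) * Qp p (M + {#c#} - {#x#}) (F x) =
        real N / real (N + 1) * (real (count M x) / real N * Qp p (M - {#x#} + {#c#}) (F x))"
        by (cases "x \<in># M") (auto simp: not_in_iff)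
    qed
    also have "\<dots> = real N / real (N + 1) * B'"
      unfolding B'_def by (simp add: sum_distrib_left)
    finally have Q': "Qp (Suc p) (M + {#c#}) E = real N / real (N + 1) * B' + A / real (N + 1)" by simp
    have "\<bar>B' - B\<bar> = \<bar>\<Sum>x\<in>set_mset M. real (count M x) / real N * (Qp p (M - {#x#} + {#c#}) (F x) - Qp p (M - {#x#}) (F x))\<bar>"
      unfolding B'_def B_def by (simp add: sum_subtractf[symmetric] algebra_simps)
    also have "\<dots> \<le> (\<Sum>x\<in>set_mset M. \<bar>real (count M x) / real N * (Qp p (M - {#x#} + {#c#}) (F x) - Qp p (M - {#x#}) (F x))\<bar>)"
      by (rule sum_abs)
    also have "\<dots> \<le> (\<Sum>x\<in>set_mset M. real (count M x) / real N * (real p / real N))"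
    proof (intro sum_mono)
      fix x assume x: "x \<in> set_mset M"
      have sz: "size (M - {#x#}) + 1 = N" using x N_def by (simp add: size_Diff_singleton) (metis Suc_pred nonempty_has_size empty_iff set_mset_empty)
      have "\<bar>Qp p (M - {#x#} + {#c#}) (F x) - Qp p (M - {#x#}) (F x)\<bar> \<le> real p / real N"
        using Suc.IH[of "M - {#x#}" "F x"] sz by (metis of_nat_1 of_nat_add)
      then show "\<bar>real (count M x) / real N * (Qp p (M - {#x#} + {#c#}) (F x) - Qp p (M - {#x#}) (F x))\<bar>
                 \<le> real (count M x) / real N * (real p / real N)"
        unfolding abs_mult abs_of_nonneg[of "real (count M x) / real N", OF divide_nonneg_nonneg[OF of_nat_0_le_iff of_nat_0_le_iff]]
        by (intro mult_left_mono) auto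
    qed
    also have "\<dots> = real (\<Sum>x\<in>set_mset M. count M x) / real N * (real p / real N)"
      by (simp add: sum_distrib_right sum_divide_distrib)
    also have "\<dots> = real p / real N"
      using N by (simp add: N_def size_multiset_overloaded_eq[symmetric])
    finally have BB: "\<bar>B' - B\<bar> \<le> real p / real N" .
    have AQ: "\<bar>A - B\<bar> \<le> 1"
      using Qp_bounds[of p M "F c"] Qp_bounds[of "Suc p" M E] Q unfolding A_def by linarith
    have "Qp (Suc p) (M + {#c#}) E - Qp (Suc p) M E = (A - B) / real (N + 1) + real N / real (N + 1) * (B' - B)"
      unfolding Q' Q using aux[of "real N" B' A B] by (simp add: add.commute)
    also have "\<bar>\<dots>\<bar> \<le> \<bar>A - B\<bar> / real (N + 1) + real N / real (N + 1) * \<bar>B' - B\<bar>"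
      by (rule order.trans[OF abs_triangle_ineq]) (simp add: abs_mult)
    also have "\<dots> \<le> 1 / real (N + 1) + real N / real (N + 1) * (real p / real N)"
      by (intro add_mono mult_left_mono divide_right_mono AQ BB) auto
    also have "\<dots> = real (Suc p) / (real (size M) + 1)"
      using N False by (simp add: N_def field_simps)
    finally show ?thesis .
  qed
qed

lemma Qp_addD: "\<bar>Qp p (M + D) E - Qp p M E\<bar> \<le> real (size D) * real p / (real (size M) + 1)"
proof (induction D)
  case empty
  then show ?case by simp
next
  case (add x D)
  have "\<bar>Qp p (M + D + {#x#}) E - Qp p (M + D) E\<bar> \<le> real p / (real (size (M + D)) + 1)"
    by (rule Qp_add1)
  also have "\<dots> \<le> real p / (real (size M) + 1)"
    by (intro divide_left_mono) auto
  finally have "\<bar>Qp p (M + D + {#x#}) E - Qp p (M + D) E\<bar> \<le> real p / (real (size M) + 1)" .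
  moreover have "\<bar>Qp p (M + add_mset x D) E - Qp p M E\<bar> \<le> \<bar>Qp p (M + D + {#x#}) E - Qp p (M + D) E\<bar> + \<bar>Qp p (M + D) E - Qp p M E\<bar>"
    by simp
  moreover have "real (size (add_mset x D)) * real p / (real (size M) + 1) = real p / (real (size M) + 1) + real (size D) * real p / (real (size M) + 1)"
    by (simp add: add_divide_distrib[symmetric] distrib_right)
  ultimately show ?case using add.IH by linarith
qed


lemma size_mset_of_mults: "size (mset_of_mults h m) = (\<Sum>a\<in>{1..h}. m a)"
  by (simp add: mset_of_mults_def size_multiset_sum)

lemma prob_Qp: "prob_rel_order h m p R = Qp p (mset_of_mults h m) {l. rel_order l = R}"
  unfolding prob_rel_order_def Qp_def
  by (subst measure_pmf_of_set) (auto simp: Int_def conj_commute)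

theorem lemma2p9:
  shows "\<exists>C::real. \<forall>(p::nat) (h::nat) (n::nat \<Rightarrow> nat) (n'::nat \<Rightarrow> nat) (R::nat set list).
    p \<le> 5 \<longrightarrow> ordered_partition p R \<longrightarrow>
    (\<forall>a\<in>{1..h}. n' a \<le> n a) \<longrightarrow>
    (\<Sum>a\<in>{1..h}. n a - n' a) \<le> 5 \<longrightarrow>
    p \<le> (\<Sum>a\<in>{1..h}. n' a) \<longrightarrow>
    \<bar>prob_rel_order h n p R - prob_rel_order h n' p R\<bar> \<le> C / real (\<Sum>a\<in>{1..h}. n a)"
proof (intro exI[of _ 125] allI impI)
  fix p h :: nat and n n' :: "nat \<Rightarrow> nat" and R :: "nat set list"
  assume p: "p \<le> 5" and le: "\<forall>a\<in>{1..h}. n' a \<le> n a" and d5: "(\<Sum>a\<in>{1..h}. n a - n' a) \<le> 5"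
  define M where "M = mset_of_mults h n'"
  define D where "D = (\<Sum>a\<in>{1..h}. replicate_mset (n a - n' a) a)"
  have MD: "mset_of_mults h n = M + D"
    unfolding M_def D_def mset_of_mults_def sum.distrib[symmetric]
    by (intro sum.cong refl) (use le in \<open>auto simp: multiset_eq_iff\<close>)
  have sD: "size D \<le> 5" using d5 by (simp add: D_def size_multiset_sum)
  have sN: "(\<Sum>a\<in>{1..h}. n a) = size M + size D"
    using MD size_mset_of_mults[of h n] by simp
  have "\<bar>prob_rel_order h n p R - prob_rel_order h n' p R\<bar> \<le> real (size D) * real p / (real (size M) + 1)"
    unfolding prob_Qp MD M_def[symmetric] by (rule Qp_addD)
  also have "\<dots> \<le> 125 / real (\<Sum>a\<in>{1..h}. n a)"
  proof (cases "size D = 0")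
    case True
    then show ?thesis by (simp add: sum_nonneg)
  next
    case False
    have "real (size D) > 0" using False by (simp add: nonempty_has_size)
    then have pos: "real (size M) + size D > 0" by (simp add: add_nonneg_pos)
    have "size D * p \<le> 25" using mult_le_mono[OF sD p] by simp
    then have "real (size D * p) \<le> real (25::nat)" by (rule of_nat_mono)
    then have "real (size D) * real p \<le> 25" by simp
    moreover have "real (size M) + real (size D) \<le> 5 * (real (size M) + 1)" using sD of_nat_mono[OF sD] by simp
    ultimately have "real (size D) * real p * (real (size M) + real (size D)) \<le> 25 * (5 * (real (size M) + 1))"
      by (rule mult_mono) auto
    then have "real (size D) * real p * (real (size M) + real (size D)) \<le> 125 * (real (size M) + 1)" by simp
    then show ?thesis unfolding sN using pos
      by (simp add: divide_le_eq le_divide_eq field_simps)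
  qed
  finally show "\<bar>prob_rel_order h n p R - prob_rel_order h n' p R\<bar> \<le> 125 / real (\<Sum>a\<in>{1..h}. n a)" .
qed

end
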